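(* Let $A$ be a unital power-associative algebra over a field $F$ (of any characteristic) which is algebraic, and let $R$ be a Rota–Baxter operator of weight zero on $A$. Then $R(1)$ is nilpotent.
   Context: A linear operator $R$ on $A$ is a Rota–Baxter operator of weight $0$ if $R(x)R(y)=R(R(x)y+xR(y))$ for all $x,y\in A$. Power-associative: every element generates an associative subalgebra. Algebraic: every element satisfies a nonzero polynomial equation over $F$. *)

theory Defs
  imports Main "HOL-Computational_Algebra.Polynomial"
begin

text \<open>A (not necessarily associative) algebra over a field 'f is modelled on the
  whole type 'a: 'a is an 'f-vector space via scal, and mul is an 'f-bilinear
  multiplication.\<close>

definition bilinear_mul :: "('f::field \<Rightarrow> 'a::ab_group_add \<Rightarrow> 'a) \<Rightarrow> ('a \<Rightarrow> 'a \<Rightarrow> 'a) \<Rightarrow> bool" where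
  "bilinear_mul scal mul \<longleftrightarrow>
     (\<forall>x y z. mul (x + y) z = mul x z + mul y z) \<and>
     (\<forall>x y z. mul x (y + z) = mul x y + mul x z) \<and>
     (\<forall>c x y. mul (scal c x) y = scal c (mul x y)) \<and>
     (\<forall>c x y. mul x (scal c y) = scal c (mul x y))"

definition unital_algebra ::
  "('f::field \<Rightarrow> 'a::ab_group_add \<Rightarrow> 'a) \<Rightarrow> ('a \<Rightarrow> 'a \<Rightarrow> 'a) \<Rightarrow> 'a \<Rightarrow> bool" where
  "unital_algebra scal mul e \<longleftrightarrow>
     vector_space scal \<and> bilinear_mul scal mul \<and> (\<forall>x. mul e x = x \<and> mul x e = x)"

inductive_set gen_subalg ::
  "('f::field \<Rightarrow> 'a::ab_group_add \<Rightarrow> 'a) \<Rightarrow> ('a \<Rightarrow> 'a \<Rightarrow> 'a) \<Rightarrow> 'a \<Rightarrow> 'a set"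
  for scal mul x where
  gen: "x \<in> gen_subalg scal mul x"
| zero: "0 \<in> gen_subalg scal mul x"
| add: "a \<in> gen_subalg scal mul x \<Longrightarrow> b \<in> gen_subalg scal mul x \<Longrightarrow> a + b \<in> gen_subalg scal mul x"
| scal: "a \<in> gen_subalg scal mul x \<Longrightarrow> scal c a \<in> gen_subalg scal mul x"
| mul: "a \<in> gen_subalg scal mul x \<Longrightarrow> b \<in> gen_subalg scal mul x \<Longrightarrow> mul a b \<in> gen_subalg scal mul x"

definition assoc_on :: "('a \<Rightarrow> 'a \<Rightarrow> 'a) \<Rightarrow> 'a set \<Rightarrow> bool" where
  "assoc_on mul S \<longleftrightarrow> (\<forall>a\<in>S. \<forall>b\<in>S. \<forall>c\<in>S. mul (mul a b) c = mul a (mul b c))"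

definition power_associative ::
  "('f::field \<Rightarrow> 'a::ab_group_add \<Rightarrow> 'a) \<Rightarrow> ('a \<Rightarrow> 'a \<Rightarrow> 'a) \<Rightarrow> bool" where
  "power_associative scal mul \<longleftrightarrow> (\<forall>x. assoc_on mul (gen_subalg scal mul x))"

primrec apow :: "('a \<Rightarrow> 'a \<Rightarrow> 'a) \<Rightarrow> 'a \<Rightarrow> 'a \<Rightarrow> nat \<Rightarrow> 'a" where
  "apow mul e x 0 = e"
| "apow mul e x (Suc n) = mul x (apow mul e x n)"

definition poly_eval ::
  "('f::field \<Rightarrow> 'a::ab_group_add \<Rightarrow> 'a) \<Rightarrow> ('a \<Rightarrow> 'a \<Rightarrow> 'a) \<Rightarrow> 'a \<Rightarrow> 'f poly \<Rightarrow> 'a \<Rightarrow> 'a" where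
  "poly_eval scal mul e p x = (\<Sum>i\<le>degree p. scal (coeff p i) (apow mul e x i))"

definition algebraic_algebra ::
  "('f::field \<Rightarrow> 'a::ab_group_add \<Rightarrow> 'a) \<Rightarrow> ('a \<Rightarrow> 'a \<Rightarrow> 'a) \<Rightarrow> 'a \<Rightarrow> bool" where
  "algebraic_algebra scal mul e \<longleftrightarrow> (\<forall>x. \<exists>p::'f poly. p \<noteq> 0 \<and> poly_eval scal mul e p x = 0)"

definition rota_baxter0 ::
  "('f::field \<Rightarrow> 'a::ab_group_add \<Rightarrow> 'a) \<Rightarrow> ('a \<Rightarrow> 'a \<Rightarrow> 'a) \<Rightarrow> ('a \<Rightarrow> 'a) \<Rightarrow> bool" where
  "rota_baxter0 scal mul R \<longleftrightarrow> Vector_Spaces.linear scal scal R \<and>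
     (\<forall>x y. mul (R x) (R y) = R (mul (R x) y + mul x (R y)))"

definition nilpotent_elem :: "('a::zero \<Rightarrow> 'a \<Rightarrow> 'a) \<Rightarrow> 'a \<Rightarrow> 'a \<Rightarrow> bool" where
  "nilpotent_elem mul e x \<longleftrightarrow> (\<exists>n>0. apow mul e x n = 0)"

end

theory Submission
  imports Defs
begin

locale RBctx = Vector_Spaces.linear scal scal R
  for scal :: "'f::field \<Rightarrow> 'a::ab_group_add \<Rightarrow> 'a" and R +
  fixes mul :: "'a \<Rightarrow> 'a \<Rightarrow> 'a" and e :: 'a
  assumes bil: "bilinear_mul scal mul"
    and unit: "\<And>x. mul e x = x" "\<And>x. mul x e = x"
    and pa: "power_associative scal mul"
    and rb: "\<And>x y. mul (R x) (R y) = R (mul (R x) y + mul x (R y))"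
begin

abbreviation "r \<equiv> R e"
abbreviation P where "P n \<equiv> apow mul e r n"

lemma mul_addR: "mul x (y + z) = mul x y + mul x z"
  using bil unfolding bilinear_mul_def by blast
lemma mul_scalR: "mul x (scal c y) = scal c (mul x y)"
  using bil unfolding bilinear_mul_def by blast

lemma mul_sumR: "mul x (sum g A) = (\<Sum>i\<in>A. mul x (g i))"
proof -
  interpret additive "mul x" by unfold_locales (rule mul_addR)
  show ?thesis by (rule sum)
qed

lemma mul_zeroR: "mul x 0 = 0"
proof -
  interpret additive "mul x" by unfold_locales (rule mul_addR)
  show ?thesis by (rule zero)
qed

lemma pow_in: "n \<ge> 1 \<Longrightarrow> P n \<in> gen_subalg scal mul r"
proof (induction n)
  case 0 then show ?case by simp
next
  case (Suc n)
  show ?case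
  proof (cases "n = 0")
    case True then show ?thesis by (simp add: unit gen_subalg.gen)
  next
    case False
    then have "P n \<in> gen_subalg scal mul r" using Suc by simp
    then show ?thesis by (simp add: gen_subalg.mul gen_subalg.gen)
  qed
qed

lemma pow_right: "mul (P n) r = P (Suc n)"
proof (induction n)
  case 0 then show ?case by (simp add: unit)
next
  case (Suc n)
  show ?case
  proof (cases "n = 0")
    case True then show ?thesis by (simp add: unit)
  next
    case False
    then have "P n \<in> gen_subalg scal mul r" using pow_in by simp
    moreover have "r \<in> gen_subalg scal mul r" by (rule gen_subalg.gen)
    ultimately have "mul (mul r (P n)) r = mul r (mul (P n) r)"
      using pa unfolding power_associative_def assoc_on_def by blast
    then show ?thesis using Suc by simp
  qed
qed

lemma key: "scal (of_nat (Suc n)) (R (P n)) = P (Suc n)"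
proof (induction n)
  case 0 then show ?case by (simp add: unit)
next
  case (Suc n)
  define x where "x = scal (of_nat (Suc n)) (P n)"
  have Rx: "R x = P (Suc n)" unfolding x_def using Suc by (simp add: scale)
  have "mul (R x) r = R (mul (R x) e + mul x r)" by (rule rb)
  also have "mul (R x) e = P (Suc n)" using Rx unit by simp
  also have "mul x r = scal (of_nat (Suc n)) (P (Suc n))"
    unfolding x_def using pow_right
    using bil unfolding bilinear_mul_def by simp
  also have "P (Suc n) + scal (of_nat (Suc n)) (P (Suc n)) = scal (of_nat (Suc (Suc n))) (P (Suc n))"
  proof -
    have "(of_nat (Suc (Suc n)) :: 'f) = 1 + of_nat (Suc n)" by simp
    then show ?thesis by (simp only: vs1.scale_left_distrib vs1.scale_one)
  qed
  finally have eq: "mul (R x) r = R (scal (of_nat (Suc (Suc n))) (P (Suc n)))" .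
  have "P (Suc (Suc n)) = mul (P (Suc n)) r" by (rule pow_right[symmetric])
  also have "\<dots> = R (scal (of_nat (Suc (Suc n))) (P (Suc n)))" using eq Rx by simp
  also have "\<dots> = scal (of_nat (Suc (Suc n))) (R (P (Suc n)))" by (rule scale)
  finally show ?case by simp
qed

lemma key2:
  assumes "of_nat (Suc n) \<noteq> (0::'f)"
  shows "R (P n) = scal (1 / of_nat (Suc n)) (P (Suc n))"
proof -
  have "scal (1 / of_nat (Suc n)) (P (Suc n)) = scal (1 / of_nat (Suc n)) (scal (of_nat (Suc n)) (R (P n)))"
    using key by simp
  also have "\<dots> = R (P n)" using assms by simp
  finally show ?thesis by simp
qed

definition S :: "nat \<Rightarrow> (nat \<Rightarrow> 'f) \<Rightarrow> 'a" where
  "S d a = (\<Sum>i\<le>d. scal (a i) (P i))"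

lemma step:
  assumes ch: "\<And>n. n > 0 \<Longrightarrow> of_nat n \<noteq> (0::'f)"
    and md: "m < d" and am: "a m \<noteq> 0" and low: "\<And>i. i < m \<Longrightarrow> a i = 0"
    and S0: "S d a = 0"
  shows "\<exists>b. b (Suc m) \<noteq> 0 \<and> (\<forall>i<Suc m. b i = 0) \<and> S d b = 0"
proof -
  define b where "b i = (if i = 0 then 0 else a (i - 1) * of_nat (d - (i - 1)) / of_nat i)" for i
  have nz: "of_nat (Suc i) \<noteq> (0::'f)" for i using ch by blast
  have "b (Suc m) \<noteq> 0" unfolding b_def using am ch[of "d - m"] ch[of "Suc m"] md by simp
  moreover have "\<forall>i<Suc m. b i = 0" unfolding b_def using low by (auto simp: less_Suc_eq_0_disj)
  moreover have "S d b = 0"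
  proof -
    obtain d' where d: "d = Suc d'" using md by (cases d) auto
    have RS: "R (S d a) = (\<Sum>i\<le>d. scal (a i / of_nat (Suc i)) (P (Suc i)))"
      unfolding S_def by (simp add: sum scale key2[OF nz])
    have MS: "mul r (S d a) = (\<Sum>i\<le>d. scal (a i) (P (Suc i)))"
      unfolding S_def by (simp add: mul_sumR mul_scalR)
    have "scal (of_nat (Suc d)) (R (S d a)) - mul r (S d a)
        = (\<Sum>i\<le>d. scal (of_nat (Suc d) * (a i / of_nat (Suc i)) - a i) (P (Suc i)))"
      unfolding RS MS by (simp add: vs1.scale_sum_right sum_subtractf vs1.scale_left_diff_distrib)
    also have "\<dots> = (\<Sum>i\<le>d. scal (b (Suc i)) (P (Suc i)))"
    proof (rule sum.cong[OF refl])
      fix i assume "i \<in> {..d}"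
      then have "i \<le> d" by simp
      then have di: "of_nat (d - i) = (of_nat d - of_nat i :: 'f)" by (simp add: of_nat_diff)
      have "of_nat (Suc d) * (a i / of_nat (Suc i)) - a i = b (Suc i)"
        unfolding b_def using nz[of i] by (simp add: field_simps di del: of_nat_Suc) (simp add: algebra_simps)
      then show "scal (of_nat (Suc d) * (a i / of_nat (Suc i)) - a i) (P (Suc i)) = scal (b (Suc i)) (P (Suc i))"
        by simp
    qed
    also have "\<dots> = S d b"
    proof -
      have "b (Suc d) = 0" unfolding b_def by simp
      then have "(\<Sum>i\<le>d. scal (b (Suc i)) (P (Suc i))) = (\<Sum>i\<le>d'. scal (b (Suc i)) (P (Suc i)))"
        unfolding d by (simp add: sum.atMost_Suc d)
      also have "\<dots> = S d b" unfolding S_def d sum.atMost_Suc_shift by (simp add: b_def)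
      finally show ?thesis .
    qed
    finally show ?thesis using S0 by (simp add: zero mul_zeroR)
  qed
  ultimately show ?thesis by blast
qed

lemma descend:
  assumes ch: "\<And>n. n > 0 \<Longrightarrow> of_nat n \<noteq> (0::'f)"
  shows "d - m = k \<Longrightarrow> m \<le> d \<Longrightarrow> a m \<noteq> 0 \<Longrightarrow> (\<forall>i<m. a i = 0) \<Longrightarrow> S d a = 0 \<Longrightarrow> P d = 0"
proof (induction k arbitrary: m a)
  case 0
  then have md: "m = d" by simp
  have "S d a = (\<Sum>i\<in>{d}. scal (a i) (P i))"
    unfolding S_def using 0 md by (intro sum.mono_neutral_right) auto
  then have "scal (a d) (P d) = 0" using 0 by simp
  then show ?case using 0 md by simp
next
  case (Suc k)
  then have "m < d" by simp
  from step[where m=m and d=d and a=a, OF ch this Suc.prems(3)] Suc.prems(4,5)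
  obtain b where "b (Suc m) \<noteq> 0" "\<forall>i<Suc m. b i = 0" "S d b = 0" by blast
  then show ?case using Suc.IH[of "Suc m" b] Suc.prems by simp
qed

lemma main:
  assumes alg: "\<exists>p::'f poly. p \<noteq> 0 \<and> poly_eval scal mul e p r = 0"
  shows "nilpotent_elem mul e r"
proof (cases "\<exists>n>0. of_nat n = (0::'f)")
  case True
  then obtain n where n: "n > 0" "of_nat n = (0::'f)" by blast
  then obtain k where k: "n = Suc k" by (cases n) auto
  have "P n = 0" using key[of k] n k by simp
  then show ?thesis unfolding nilpotent_elem_def using n by blast
next
  case False
  then have ch: "\<And>n. n > 0 \<Longrightarrow> of_nat n \<noteq> (0::'f)" by blast
  obtain p :: "'f poly" where p: "p \<noteq> 0" "poly_eval scal mul e p r = 0" using alg by blast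
  define d where "d = degree p"
  define a where "a = coeff p"
  define j where "j = (LEAST i. a i \<noteq> 0)"
  have ad: "a d \<noteq> 0" unfolding a_def d_def using p by simp
  have aj: "a j \<noteq> 0" unfolding j_def using ad by (rule LeastI)
  have jd: "j \<le> d" unfolding j_def using ad by (rule Least_le)
  have low: "\<forall>i<j. a i = 0" unfolding j_def using not_less_Least by blast
  have "S d a = 0" using p unfolding S_def poly_eval_def a_def d_def by simp
  then have Pd: "P d = 0" using descend[OF ch refl jd aj low] by simp
  show ?thesis
  proof (cases "d = 0")
    case False then show ?thesis unfolding nilpotent_elem_def using Pd by blast
  next
    case True
    then have "e = 0" using Pd by simp
    then have "P 1 = 0" by (simp add: mul_zeroR)
    then show ?thesis unfolding nilpotent_elem_def by blast
  qed
qed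

end

theorem lemma10:
  fixes scal :: "'f::field \<Rightarrow> 'a::ab_group_add \<Rightarrow> 'a"
    and mul :: "'a \<Rightarrow> 'a \<Rightarrow> 'a" and e :: 'a and R :: "'a \<Rightarrow> 'a"
  assumes "unital_algebra scal mul e"
    and "power_associative scal mul"
    and "algebraic_algebra scal mul e"
    and "rota_baxter0 scal mul R"
  shows "nilpotent_elem mul e (R e)"
proof -
  have lin: "Vector_Spaces.linear scal scal R" using assms(4) unfolding rota_baxter0_def by blast
  interpret RBctx scal R mul e
    using lin assms unfolding RBctx_def RBctx_axioms_def unital_algebra_def rota_baxter0_def
    by blast
  show ?thesis using main assms(3) unfolding algebraic_algebra_def by blast
qed

end
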